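(* Let $K$ be a field with algebraic closure $\overline K$, let $n\ge2$ and $1\le s<n$ be integers, and let $b\ge2$ be an integer. For a degree pattern $\mathbf d=(d_1,\dots,d_s)$ with $d_1\ge\cdots\ge d_s\ge1$, $d_1\ge2$, write $\delta(\mathbf d)=d_1\cdots d_s$, $D_i(\mathbf d)=\binom{d_i+n}{n}-1$ and $\mathbb P^{\mathbf D(\mathbf d)}_{\overline K}=\mathbb P^{D_1(\mathbf d)}_{\overline K}\times\cdots\times\mathbb P^{D_s(\mathbf d)}_{\overline K}$, and let $\mathbf d^{(b)}=(b,1,\dots,1)$. Then for every degree pattern $\mathbf d\ne\mathbf d^{(b)}$ with $\delta(\mathbf d)=b$, $$\dim\mathbb P^{\mathbf D(\mathbf d^{(b)})}_{\overline K}\ge\dim\mathbb P^{\mathbf D(\mathbf d)}_{\overline K}+g(b).$$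
   Context: $g(b)=0$ if $b$ is prime; otherwise $g(b)=\binom{b+n}{n}-\binom{b/\rho+n}{n}-\binom{\rho+n}{n}$, where $\rho$ is the smallest prime dividing $b$. *)

theory Defs
  imports "HOL-Computational_Algebra.Primes"
begin

definition degree_pattern :: "nat \<Rightarrow> nat list \<Rightarrow> bool" where
  "degree_pattern s d \<longleftrightarrow> length d = s \<and> s \<ge> 1 \<and> sorted_wrt (\<ge>) d
      \<and> (\<forall>x\<in>set d. x \<ge> 1) \<and> d ! 0 \<ge> 2"

definition delta :: "nat list \<Rightarrow> nat" where
  "delta d = prod_list d"

definition Dvec :: "nat \<Rightarrow> nat list \<Rightarrow> nat list" where
  "Dvec n d = map (\<lambda>di. ((di + n) choose n) - 1) d"

definition dim_proj_product :: "nat list \<Rightarrow> nat" where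
  "dim_proj_product Ds = sum_list Ds"

definition dpat :: "nat \<Rightarrow> nat \<Rightarrow> nat list" where
  "dpat b s = b # replicate (s - 1) 1"

definition min_prime :: "nat \<Rightarrow> nat" where
  "min_prime b = Min (prime_factors b)"

definition g :: "nat \<Rightarrow> nat \<Rightarrow> int" where
  "g n b = (if prime b then 0 else
     int ((b + n) choose n) - int ((b div min_prime b + n) choose n)
       - int ((min_prime b + n) choose n))"

end

theory Submission
  imports Defs
begin

definition Cb :: "nat \<Rightarrow> nat \<Rightarrow> nat" where "Cb n x = (x + n) choose n"

lemma Cb_Suc: "n \<ge> 1 \<Longrightarrow> Cb n (Suc x) = Cb n x + ((x + n) choose (n - 1))"
proof -
  assume "n \<ge> 1"
  then obtain k where k: "n = Suc k" by (cases n) auto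
  have "Cb n (Suc x) = (Suc (x + n) choose Suc k)" by (simp add: Cb_def k)
  also have "\<dots> = ((x+n) choose k) + ((x+n) choose Suc k)" by simp
  finally show ?thesis by (simp add: Cb_def k)
qed

lemma Cb_mono: "n \<ge> 1 \<Longrightarrow> x \<le> y \<Longrightarrow> Cb n x \<le> Cb n y"
proof (induction y)
  case 0 then show ?case by simp
next
  case (Suc y)
  then show ?case
    by (cases "x = Suc y") (auto simp: Cb_Suc le_Suc_eq intro: le_trans)
qed

lemma Cb_pos: "Cb n x \<ge> 1"
  by (simp add: Cb_def Suc_leI)

lemma Cb_one: "Cb n 1 = n + 1"
  by (simp add: Cb_def)

lemma Cb_Suc0: "Cb n (Suc 0) = n + 1"
  by (simp add: Cb_def)

lemma Cb_shift: "n \<ge> 1 \<Longrightarrow> a \<le> y \<Longrightarrow> Cb n (a + t) + Cb n y \<le> Cb n a + Cb n (y + t)"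
proof (induction t)
  case 0 then show ?case by simp
next
  case (Suc t)
  have "((a + t + n) choose (n - 1)) \<le> ((y + t + n) choose (n - 1))"
    using Suc.prems by (intro binomial_right_mono) simp
  then show ?case using Suc by (simp add: Cb_Suc)
qed

lemma Cb_mult_aux: "n \<ge> 1 \<Longrightarrow> 1 \<le> x \<Longrightarrow> x \<le> y \<Longrightarrow> Cb n x + Cb n y \<le> Cb n (x * y) + Cb n 1"
proof -
  assume h: "n \<ge> 1" "1 \<le> x" "x \<le> y"
  have "Cb n (1 + (x - 1)) + Cb n y \<le> Cb n 1 + Cb n (y + (x - 1))"
    using h by (intro Cb_shift) auto
  moreover have "y + (x - 1) \<le> x * y"
  proof -
    have "(x - 1) * (y - 1) \<ge> 0" by simp
    have "x * y = (1 + (x - 1)) * y" using h by simp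
    also have "\<dots> = y + (x - 1) * y" by (simp add: algebra_simps)
    finally have e: "x * y = y + (x - 1) * y" .
    have "(x - 1) * 1 \<le> (x - 1) * y" using h by (intro mult_le_mono2) simp
    then show ?thesis using e by simp
  qed
  ultimately show ?thesis using h Cb_mono[of n "y + (x - 1)" "x * y"] by simp
qed

lemma Cb_mult: "n \<ge> 1 \<Longrightarrow> 1 \<le> x \<Longrightarrow> 1 \<le> y \<Longrightarrow> Cb n x + Cb n y \<le> Cb n (x * y) + Cb n 1"
  using Cb_mult_aux[of n x y] Cb_mult_aux[of n y x] by (cases "x \<le> y") (auto simp: mult.commute)

lemma prod_list_ge1: "\<forall>x\<in>set l. x \<ge> (1::nat) \<Longrightarrow> prod_list l \<ge> 1"
  by (induction l) (auto simp: Suc_le_eq)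

lemma Cb_list: "n \<ge> 1 \<Longrightarrow> l \<noteq> [] \<Longrightarrow> \<forall>x\<in>set l. x \<ge> 1 \<Longrightarrow>
   sum_list (map (Cb n) l) \<le> Cb n (prod_list l) + (length l - 1) * Cb n 1"
proof (induction l)
  case Nil then show ?case by simp
next
  case (Cons x l)
  show ?case
  proof (cases "l = []")
    case True then show ?thesis by simp
  next
    case False
    have IH: "sum_list (map (Cb n) l) \<le> Cb n (prod_list l) + (length l - 1) * Cb n 1"
      using Cons False by auto
    have "prod_list l \<ge> 1" using Cons.prems prod_list_ge1[of l] by simp
    then have "Cb n x + Cb n (prod_list l) \<le> Cb n (x * prod_list l) + Cb n 1"
      using Cons.prems by (intro Cb_mult) auto
    moreover have "length l \<ge> 1" using False by (cases l) auto
    moreover have "(length l - 1) * Cb n 1 + Cb n 1 = length l * Cb n 1"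
      using \<open>length l \<ge> 1\<close> by (cases "length l") auto
    ultimately show ?thesis using IH by simp
  qed
qed


lemma dim_sum: "int (dim_proj_product (Dvec n l)) = int (sum_list (map (Cb n) l)) - int (length l)"
proof -
  have "sum_list (map (\<lambda>di. ((di + n) choose n) - 1) l) + length l = sum_list (map (Cb n) l)"
  proof (induction l)
    case Nil then show ?case by simp
  next
    case (Cons x l)
    have "Cb n x \<ge> 1" by (rule Cb_pos)
    then show ?case using Cons by (simp add: Cb_def)
  qed
  then show ?thesis unfolding dim_proj_product_def Dvec_def by linarith
qed

lemma prod_list_one: "\<forall>x\<in>set l. x \<ge> (1::nat) \<Longrightarrow> prod_list l = 1 \<Longrightarrow> \<forall>x\<in>set l. x = 1"
  by (induction l) auto

lemma Cb_pair: "n \<ge> 1 \<Longrightarrow> 1 \<le> p \<Longrightarrow> p \<le> x \<Longrightarrow> x \<le> y \<Longrightarrow> x * y = p * q \<Longrightarrow> Cb n x + Cb n y \<le> Cb n p + Cb n q"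
proof -
  assume h: "n \<ge> 1" "1 \<le> p" "p \<le> x" "x \<le> y" "x * y = p * q"
  have c1: "Cb n (p + (x - p)) + Cb n y \<le> Cb n p + Cb n (y + (x - p))"
    using h by (intro Cb_shift) auto
  have "p * x \<le> y * x" using h by (intro mult_le_mono1) simp
  then have "p * x \<le> p * q" using h(5) by (simp add: mult.commute)
  then have xq: "x \<le> q" using h(2) by simp
  have A: "(int x - int p) * (int q - int x) \<ge> 0" using h xq by (intro mult_nonneg_nonneg) auto
  have "int (x * y) = int (p * q)" using h(5) by simp
  then have eq: "int x * int y = int p * int q" by simp
  have "int x * (int p + int q) - int x * (int x + int y) = (int x - int p) * (int q - int x)"
    using eq by (simp add: algebra_simps)
  then have "int x * (int x + int y) \<le> int x * (int p + int q)" using A by linarith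
  moreover have "int x > 0" using h by simp
  ultimately have "int x + int y \<le> int p + int q" by simp
  then have "x + y \<le> p + q" by simp
  then have "y + (x - p) \<le> q" using h by simp
  then have "Cb n (y + (x - p)) \<le> Cb n q" using h(1) by (rule Cb_mono[rotated])
  then show ?thesis using c1 h by simp
qed

theorem corollary5p2:
  fixes n s b :: nat and d :: "nat list"
  assumes "n \<ge> 2" and "1 \<le> s" and "s < n" and "b \<ge> 2"
    and "degree_pattern s d" and "d \<noteq> dpat b s" and "delta d = b"
  shows "int (dim_proj_product (Dvec n (dpat b s)))
           \<ge> int (dim_proj_product (Dvec n d)) + g n b"
proof -
  have n1: "n \<ge> 1" using assms by simp
  have dp: "length d = s" "\<forall>x\<in>set d. x \<ge> 1" "d ! 0 \<ge> 2"
    using assms(5) unfolding degree_pattern_def by auto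
  obtain d1 rest where d: "d = d1 # rest" using dp(1) assms(2) by (cases d) auto
  have d1: "d1 \<ge> 2" using dp d by simp
  have rest1: "\<forall>x\<in>set rest. x \<ge> 1" using dp d by simp
  have lrest: "length rest = s - 1" using dp d by simp
  define m where "m = prod_list rest"
  have bm: "b = d1 * m" using assms(7) d by (simp add: delta_def m_def)
  have m1: "m \<ge> 1" using prod_list_ge1[OF rest1] m_def by simp
  have m2: "m \<ge> 2"
  proof (rule ccontr)
    assume "\<not> m \<ge> 2"
    then have "m = 1" using m1 by simp
    then have "\<forall>x\<in>set rest. x = 1" using prod_list_one[OF rest1] m_def by simp
    then have "rest = replicate (s - 1) 1" using lrest replicate_length_same[of rest 1] by simp
    moreover have "d1 = b" using bm \<open>m = 1\<close> by simp
    ultimately have "d = dpat b s" using d by (simp add: dpat_def)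
    then show False using assms(6) by simp
  qed
  have restne: "rest \<noteq> []" using m2 m_def by auto
  have s2: "s \<ge> 2" using restne lrest by (cases rest) auto
  have b0: "b \<noteq> 0" using assms(4) by simp
  have npr: "\<not> prime b"
  proof
    assume "prime b"
    moreover have "d1 dvd b" using bm by simp
    ultimately have "d1 = 1 \<or> d1 = b" unfolding prime_nat_iff by blast
    then show False using d1 bm m2 by auto
  qed
  define p where "p = min_prime b"
  have fin: "finite (prime_factors b)" by simp
  have ne: "prime_factors b \<noteq> {}"
    using prime_factor_nat[of b] assms(4) b0 by (auto simp: prime_factors_dvd)
  have pin: "p \<in> prime_factors b" unfolding p_def min_prime_def using fin ne by simp
  have pp: "prime p" "p dvd b" using pin by auto
  have pmin: "p \<le> x" if "x \<ge> 2" "x dvd b" for x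
  proof -
    have "x \<noteq> 1" using that(1) by simp
    then obtain r where r: "prime r" "r dvd x" using prime_factor_nat[of x] by blast
    have "r dvd b" using r(2) that(2) by (rule dvd_trans)
    then have "r \<in> prime_factors b" using r(1) b0 by (simp add: prime_factors_dvd)
    then have "p \<le> r" unfolding p_def min_prime_def by (rule Min_le[OF fin])
    moreover have "r \<le> x" using r(2) that(1) by (intro dvd_imp_le) auto
    ultimately show ?thesis by simp
  qed
  define q where "q = b div p"
  have bpq: "b = p * q" unfolding q_def using pp(2) by (rule dvd_mult_div_cancel[symmetric])
  have p1: "p \<ge> 1" using prime_ge_1_nat[OF pp(1)] .
  have key: "Cb n d1 + Cb n m \<le> Cb n p + Cb n q"
  proof (cases "d1 \<le> m")
    case True
    have "p \<le> d1" using pmin[of d1] d1 bm by simp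
    then show ?thesis using Cb_pair[of n p d1 m q] n1 p1 True bm bpq by simp
  next
    case False
    have "p \<le> m" using pmin[of m] m2 bm by simp
    then show ?thesis using Cb_pair[of n p m d1 q] n1 p1 False bm bpq by (simp add: mult.commute)
  qed
  have S: "sum_list (map (Cb n) rest) \<le> Cb n m + (length rest - 1) * Cb n 1"
    using Cb_list[OF n1 restne rest1] m_def by simp
  have gb: "g n b = int (Cb n b) - int (Cb n q) - int (Cb n p)"
    using npr by (simp add: g_def Cb_def p_def q_def)
  have A: "int (dim_proj_product (Dvec n (dpat b s))) = int (Cb n b) + int (s - 1) * int (n + 1) - int s"
    unfolding dim_sum dpat_def using assms(2) by (cases s) (simp_all add: Cb_one Cb_Suc0 sum_list_replicate algebra_simps)
  have B: "int (dim_proj_product (Dvec n d)) = int (Cb n d1) + int (sum_list (map (Cb n) rest)) - int s"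
    unfolding dim_sum using d dp(1) by simp
  have S': "int (sum_list (map (Cb n) rest)) \<le> int (Cb n m) + int ((s - 2) * (n + 1))"
  proof -
    have "length rest - 1 = s - 2" using lrest by simp
    then have "sum_list (map (Cb n) rest) \<le> Cb n m + (s - 2) * (n + 1)" using S by (simp add: Cb_one Cb_Suc0 algebra_simps)
    then have "int (sum_list (map (Cb n) rest)) \<le> int (Cb n m + (s - 2) * (n + 1))" by (simp only: of_nat_le_iff)
    then show ?thesis by (simp only: of_nat_add)
  qed
  have "(s - 2) * (n + 1) \<le> (s - 1) * (n + 1)" by (intro mult_le_mono1) simp
  then have "int ((s - 2) * (n + 1)) \<le> int ((s - 1) * (n + 1))" by (simp only: of_nat_le_iff)
  moreover have "int ((s - 1) * (n + 1)) = int (s - 1) * int (n + 1)" by (simp only: of_nat_mult)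
  ultimately have "int ((s - 2) * (n + 1)) \<le> int (s - 1) * int (n + 1)" by simp
  then show ?thesis using A B S' gb key by linarith
qed

end
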